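(* In the Haechi protocol (described in the context), consider any ordering cycle of the beacon chain. The block timestamp of any in-flight CrossLink is larger than the block timestamps of all CrossLinks that are ordered in the current ordering cycle.
   Context: Setting (Haechi). A sharded blockchain has shards $S_1,\dots,S_m$; shard $S_i$ maintains a chain $SC_i=\{SC_i^1,SC_i^2,\dots\}$ of blocks, where $SC_i^h$ is the block at height $h$. Each block carries a block timestamp, fixed by the shard's intra-shard BFT consensus, and block timestamps are strictly increasing in block height within each shard. A beacon shard $S_0$ maintains a beacon chain. Transactions calling order-sensitive contracts are called OTXs. Processing phase: when shard $S_i$ handles its block at height $h$, it collects the valid new OTXs of that block, in their in-block order, into a list $L_{tx}$ and sends to the beacon chain (with a quorum certificate) a CrossLink $CL=\langle blockTS, L_{tx}, i, h\rangle$, where $blockTS$ is the block's timestamp. Ordering phase (finalization fairness algorithm): for each shard $i$ the beacon chain keeps a sequence $shardCLs[i]$ of received CrossLinks of $S_i$ with consecutive block heights; a received CrossLink whose height is exactly one more than the height of the last element of $shardCLs[i]$ is appended, together with any buffered CrossLinks of $S_i$ that then continue the consecutive sequence; a CrossLink whose height exceeds that by more than one is buffered in a pool. $shardLastTS[i]$ is the block timestamp of the last CrossLink in $shardCLs[i]$. An ordering cycle is triggered once $shardCLs[i]$ contains at least one CrossLink for every $i$; the beacon chain then selects all CrossLinks in $shardCLs$ with $blockTS\le \min_{1\le i\le m} shardLastTS[i]$, and orders their OTXs: OTXs in a CrossLink with smaller block timestamp first, and within the same CrossLink by smaller index first. This order is agreed by one instance of the beacon shard's BFT consensus and is then used by the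 contract shards to execute the transactions. An in-flight CrossLink is a CrossLink of some shard that has not yet been received by the beacon chain (its block is still being processed or the CrossLink is still in transit). *)

theory Defs
  imports Complex_Main
begin

text \<open>A CrossLink is identified by its shard index i and block height h (heights start at 1);
  its block timestamp is ts i h.  The beacon state consists of, per shard,
  the list of heights currently in shardCLs[i] and the set of buffered (pooled) heights.\<close>

type_synonym bstate = "(nat \<Rightarrow> nat list) \<times> (nat \<Rightarrow> nat set)"

definition lastH :: "nat list \<Rightarrow> nat" where
  "lastH xs = (if xs = [] then 0 else last xs)"

text \<open>Append buffered CrossLinks that continue the consecutive sequence (fuel bounds the loop).\<close>
fun drain :: "nat \<Rightarrow> nat set \<Rightarrow> nat list \<Rightarrow> nat list" where
  "drain 0 P xs = xs"
| "drain (Suc n) P xs =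
     (if Suc (lastH xs) \<in> P then drain n P (xs @ [Suc (lastH xs)]) else xs)"

definition recv :: "nat \<times> nat \<Rightarrow> bstate \<Rightarrow> bstate" where
  "recv c s = (case c of (i, h) \<Rightarrow> case s of (cls, pool) \<Rightarrow>
     if h = Suc (lastH (cls i)) then
       (let xs' = drain (card (pool i)) (pool i) (cls i @ [h])
        in (cls(i := xs'), pool(i := {x \<in> pool i. lastH xs' < x})))
     else if Suc (lastH (cls i)) < h then (cls, pool(i := insert h (pool i)))
     else (cls, pool))"

definition init_state :: bstate where
  "init_state = (\<lambda>_. [], \<lambda>_. {})"

definition beacon_state :: "(nat \<times> nat) list \<Rightarrow> bstate" where
  "beacon_state arr = foldl (\<lambda>s c. recv c s) init_state arr"

definition shardCLs :: "(nat \<times> nat) list \<Rightarrow> nat \<Rightarrow> nat list" where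
  "shardCLs arr i = fst (beacon_state arr) i"

definition shardLastTS :: "(nat \<Rightarrow> nat \<Rightarrow> real) \<Rightarrow> (nat \<times> nat) list \<Rightarrow> nat \<Rightarrow> real" where
  "shardLastTS ts arr i = ts i (last (shardCLs arr i))"

definition cycle_triggered :: "nat \<Rightarrow> (nat \<times> nat) list \<Rightarrow> bool" where
  "cycle_triggered m arr = (\<forall>i\<in>{1..m}. shardCLs arr i \<noteq> [])"

definition ordered_in_cycle ::
  "nat \<Rightarrow> (nat \<Rightarrow> nat \<Rightarrow> real) \<Rightarrow> (nat \<times> nat) list \<Rightarrow> (nat \<times> nat) set" where
  "ordered_in_cycle m ts arr =
     {(i, h). i \<in> {1..m} \<and> h \<in> set (shardCLs arr i) \<and>
              ts i h \<le> Min ((shardLastTS ts arr) ` {1..m})}"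

definition in_flight :: "nat \<Rightarrow> (nat \<times> nat) list \<Rightarrow> (nat \<times> nat) set" where
  "in_flight m arr = {(j, h). j \<in> {1..m} \<and> 1 \<le> h \<and> (j, h) \<notin> set arr}"

end

theory Submission
  imports Defs
begin

lemma lastH_upt: "lastH [1..<Suc n] = n"
  by (cases n) (auto simp: lastH_def)

lemma drain_inv:
  assumes "xs = [1..<Suc (length xs)]"
  shows "drain n P xs = [1..<Suc (length (drain n P xs))] \<and> set (drain n P xs) \<subseteq> set xs \<union> P"
  using assms
proof (induction n arbitrary: xs)
  case 0
  then show ?case by simp
next
  case (Suc n)
  have lx: "lastH xs = length xs" using Suc.prems lastH_upt by metis
  show ?case
  proof (cases "Suc (lastH xs) \<in> P")
    case True
    let ?ys = "xs @ [Suc (lastH xs)]"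
    have "?ys = [1..<Suc (length ?ys)]" using Suc.prems lx
      by (metis length_append_singleton upt_Suc_append le_add1 plus_1_eq_Suc)
    from Suc.IH[OF this] True show ?thesis by auto
  next
    case False
    then show ?thesis using Suc.prems by simp
  qed
qed

definition inv :: "(nat \<times> nat) list \<Rightarrow> bstate \<Rightarrow> bool" where
  "inv arr s = (\<forall>i. fst s i = [1..<Suc (length (fst s i))] \<and>
      (\<forall>h\<in>set (fst s i) \<union> snd s i. (i, h) \<in> set arr))"

lemma inv_recv:
  assumes "inv arr s"
  shows "inv (arr @ [c]) (recv c s)"
proof -
  obtain cls pool where s: "s = (cls, pool)" by fastforce
  obtain i h where c: "c = (i, h)" by fastforce
  have I: "\<And>k. cls k = [1..<Suc (length (cls k))]"
      and S: "\<And>k x. x \<in> set (cls k) \<union> pool k \<Longrightarrow> (k, x) \<in> set arr"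
    using assms by (auto simp: inv_def s)
  show ?thesis
  proof (cases "h = Suc (lastH (cls i))")
    case True
    have lx: "lastH (cls i) = length (cls i)" using I lastH_upt by metis
    let ?ys = "cls i @ [h]"
    have ys: "?ys = [1..<Suc (length ?ys)]" using I[of i] lx True
      by (metis length_append_singleton upt_Suc_append le_add1 plus_1_eq_Suc)
    note D = drain_inv[OF ys, of "card (pool i)" "pool i"]
    define xs' where "xs' = drain (card (pool i)) (pool i) ?ys"
    have r: "recv c s = (cls(i := xs'), pool(i := {x \<in> pool i. lastH xs' < x}))"
      using True unfolding recv_def s c xs'_def by (simp add: Let_def)
    have D1: "xs' = [1..<Suc (length xs')]" and D2: "set xs' \<subseteq> set (cls i) \<union> {h} \<union> pool i"
      using D unfolding xs'_def by auto
    have hin: "(i, h) \<in> set (arr @ [c])" using c by simp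
    show ?thesis unfolding inv_def r
    proof (intro allI conjI ballI)
      fix k
      show "fst (cls(i := xs'), pool(i := {x \<in> pool i. lastH xs' < x})) k =
        [1..<Suc (length (fst (cls(i := xs'), pool(i := {x \<in> pool i. lastH xs' < x})) k))]"
        using D1 I[of k] by (cases "k = i") (simp_all del: upt_Suc)
      fix x assume "x \<in> set (fst (cls(i := xs'), pool(i := {x \<in> pool i. lastH xs' < x})) k) \<union>
        snd (cls(i := xs'), pool(i := {x \<in> pool i. lastH xs' < x})) k"
      then show "(k, x) \<in> set (arr @ [c])"
        using S D2 hin by (cases "k = i") auto
    qed
  next
    case False
    then have r: "recv c s = (cls, pool(i := (if Suc (lastH (cls i)) < h then insert h (pool i) else pool i)))"
      unfolding recv_def s c by auto
    have hin: "(i, h) \<in> set (arr @ [c])" using c by simp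
    show ?thesis unfolding inv_def r
    proof (intro allI conjI ballI)
      fix k
      show "fst (cls, pool(i := (if Suc (lastH (cls i)) < h then insert h (pool i) else pool i))) k =
        [1..<Suc (length (fst (cls, pool(i := (if Suc (lastH (cls i)) < h then insert h (pool i) else pool i))) k))]"
        using I[of k] by (simp del: upt_Suc)
      fix x assume "x \<in> set (fst (cls, pool(i := (if Suc (lastH (cls i)) < h then insert h (pool i) else pool i))) k) \<union>
        snd (cls, pool(i := (if Suc (lastH (cls i)) < h then insert h (pool i) else pool i))) k"
      then show "(k, x) \<in> set (arr @ [c])"
        using S hin by (cases "k = i") (auto split: if_splits)
    qed
  qed
qed

lemma inv_beacon: "inv arr (beacon_state arr)"
proof (induction arr rule: rev_induct)
  case Nil
  then show ?case by (simp add: inv_def beacon_state_def init_state_def)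
next
  case (snoc c arr)
  then show ?case using inv_recv by (simp add: beacon_state_def)
qed

theorem lemma1:
  fixes m :: nat and ts :: "nat \<Rightarrow> nat \<Rightarrow> real" and arr :: "(nat \<times> nat) list"
  assumes "1 \<le> m"
    and "\<forall>i\<in>{1..m}. strict_mono (ts i)"
    and "\<forall>(i, h)\<in>set arr. i \<in> {1..m} \<and> 1 \<le> h"
    and "cycle_triggered m arr"
    and "(i, h) \<in> ordered_in_cycle m ts arr"
    and "(j, h') \<in> in_flight m arr"
  shows "ts i h < ts j h'"
proof -
  have j: "j \<in> {1..m}" "1 \<le> h'" "(j, h') \<notin> set arr" using assms(6) by (auto simp: in_flight_def)
  define k where "k = length (shardCLs arr j)"
  have L: "shardCLs arr j = [1..<Suc k]" and S: "\<forall>x\<in>set (shardCLs arr j). (j, x) \<in> set arr"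
    using inv_beacon[of arr] unfolding inv_def shardCLs_def k_def by auto
  have ne: "shardCLs arr j \<noteq> []" using assms(4) j(1) by (auto simp: cycle_triggered_def)
  then have k1: "k \<ge> 1" using L by (cases k) auto
  have "h' \<notin> set (shardCLs arr j)" using S j(3) by auto
  then have "h' > k" using L j(2) by auto
  then have lt: "ts j k < ts j h'" using assms(2) j(1) by (auto simp: strict_mono_def)
  have last: "shardLastTS ts arr j = ts j k" using L k1
    by (simp add: shardLastTS_def)
  have "Min ((shardLastTS ts arr) ` {1..m}) \<le> shardLastTS ts arr j"
    using j(1) by (intro Min_le) auto
  moreover have "ts i h \<le> Min ((shardLastTS ts arr) ` {1..m})"
    using assms(5) by (auto simp: ordered_in_cycle_def)
  ultimately show ?thesis using lt last by linarith
qed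

end
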